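(* Let $(q_n)$ and $(p_n)$ be sequences with $q_n\in(0,1)$, $p_n\in(q_n,1]$, $\lim_{n\to\infty}p_n=\lim_{n\to\infty}q_n=1$, $\lim_{n\to\infty}p_n^n=a$, $\lim_{n\to\infty}q_n^n=b$, and $\lim_{n\to\infty}1/[n]_{p_n,q_n}=0$. Then for each $f\in C[0,1]$, $\widetilde{M}_{n,k}^{(p_n,q_n)}(f;x)$ converges to $f(x)$ uniformly on $[0,1]$ as $n\to\infty$.
   Context: For $0<q<p\le1$: $[n]_{p,q}=\frac{p^n-q^n}{p-q}$; $[n]_{p,q}!=[1]_{p,q}\cdots[n]_{p,q}$, $[0]_{p,q}!=1$; $\begin{bmatrix}n\\k\end{bmatrix}_{p,q}=\frac{[n]_{p,q}!}{[k]_{p,q}![n-k]_{p,q}!}$; $(x+y)_{p,q}^n=\prod_{j=0}^{n-1}(p^jx+q^jy)$. The $(p,q)$-integral is $\int_0^a f(t)\,d_{p,q}t=(p-q)a\sum_{j=0}^\infty \frac{q^j}{p^{j+1}}f\!\left(\frac{q^j}{p^{j+1}}a\right)$. Define $m_{n,k}^{(p,q)}(x)=\frac{1}{p^{kn+n(n+1)/2}}\begin{bmatrix}n+k\\k\end{bmatrix}_{p,q}x^k(1-x)^{n+1}_{p,q}$ and $b_{n,k}^{(p,q)}(qt)=\frac{1}{p^{k(n-1)+n(n-1)/2}}\begin{bmatrix}n+k+1\\k\end{bmatrix}_{p,q}(qt)^k(1-qt)^n_{p,q}$. The operator is $$\widetilde{M}_{n,k}^{(p,q)}(f;x)=\frac{[n+1]_{p,q}}{p^n}\sum_{k=0}^\infty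 m_{n,k}^{(p,q)}(x)\,(pq)^{-k}\int_0^1 b_{n,k}^{(p,q)}(qt)f(t)\,d_{p,q}t,\quad 0\le x<1,$$ and $\widetilde{M}_{n,k}^{(p,q)}(f;1)=f(1)$. *)

theory Defs
  imports "HOL-Analysis.Analysis"
begin

definition pq_int :: "real \<Rightarrow> real \<Rightarrow> nat \<Rightarrow> real" where
  "pq_int p q n = (p ^ n - q ^ n) / (p - q)"

definition pq_fact :: "real \<Rightarrow> real \<Rightarrow> nat \<Rightarrow> real" where
  "pq_fact p q n = (\<Prod>i = 1..n. pq_int p q i)"

definition pq_binom :: "real \<Rightarrow> real \<Rightarrow> nat \<Rightarrow> nat \<Rightarrow> real" where
  "pq_binom p q n k = pq_fact p q n / (pq_fact p q k * pq_fact p q (n - k))"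

definition pq_pow :: "real \<Rightarrow> real \<Rightarrow> real \<Rightarrow> real \<Rightarrow> nat \<Rightarrow> real" where
  "pq_pow p q x y n = (\<Prod>j<n. p ^ j * x + q ^ j * y)"

definition pq_integral :: "real \<Rightarrow> real \<Rightarrow> real \<Rightarrow> (real \<Rightarrow> real) \<Rightarrow> real" where
  "pq_integral p q a f =
     (p - q) * a * (\<Sum>j. q ^ j / p ^ (j + 1) * f (q ^ j / p ^ (j + 1) * a))"

definition m_pq :: "real \<Rightarrow> real \<Rightarrow> nat \<Rightarrow> nat \<Rightarrow> real \<Rightarrow> real" where
  "m_pq p q n k x =
     1 / p ^ (k * n + n * (n + 1) div 2) * pq_binom p q (n + k) k * x ^ k
       * pq_pow p q 1 (- x) (n + 1)"

text \<open>b_{n,k}^{(p,q)}(s), to be evaluated at s = q t.  The exponent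
  k(n-1) + n(n-1)/2 is taken as a real number (so it is correct also for n = 0).\<close>
definition b_pq :: "real \<Rightarrow> real \<Rightarrow> nat \<Rightarrow> nat \<Rightarrow> real \<Rightarrow> real" where
  "b_pq p q n k s =
     1 / p powr (real k * (real n - 1) + real n * (real n - 1) / 2)
       * pq_binom p q (n + k + 1) k * s ^ k * pq_pow p q 1 (- s) n"

text \<open>Extension of a function given on [0,1] to the whole line by clamping;
  needed because the (p,q)-integral over [0,1] samples the point 1/p \<ge> 1.\<close>
definition ext01 :: "(real \<Rightarrow> real) \<Rightarrow> real \<Rightarrow> real" where
  "ext01 f t = f (max 0 (min 1 t))"

definition M_pq :: "real \<Rightarrow> real \<Rightarrow> nat \<Rightarrow> (real \<Rightarrow> real) \<Rightarrow> real \<Rightarrow> real" where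
  "M_pq p q n f x =
     (if x = 1 then f 1
      else pq_int p q (n + 1) / p ^ n *
        (\<Sum>k. m_pq p q n k x * (p * q) powi (- int k)
               * pq_integral p q 1 (\<lambda>t. b_pq p q n k (q * t) * ext01 f t)))"

end

theory Submission
  imports Defs
begin

definition Cq :: "real \<Rightarrow> nat \<Rightarrow> nat \<Rightarrow> real" where
  "Cq r n k = (\<Prod>i=1..k. (1 - r^(n+i)) / (1 - r^i))"

definition Pq :: "real \<Rightarrow> real \<Rightarrow> nat \<Rightarrow> real" where
  "Pq r z m = (\<Prod>i<m. 1 - r^i * z)"

lemma Cq_0 [simp]: "Cq r n 0 = 1" by (simp add: Cq_def)

lemma Cq_Suc: "Cq r n (Suc k) = Cq r n k * (1 - r^(n+Suc k)) / (1 - r^Suc k)"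
  by (simp add: Cq_def)

lemma pascal_alg:
  fixes cc r uu vv :: real
  assumes "1 - r*uu \<noteq> 0" "1 - r * vv \<noteq> 0"
  shows "cc*(1 - r*uu * vv)/(1 - r*uu) * (1 - r*r*uu * vv)/(1 - r * vv) =
    cc*(1 - r*uu * vv)/(1-r * vv) + r*uu*(cc*(1 - r*uu * vv)/(1 - r*uu))"
  using assms by (simp add: field_simps)

definition Bw :: "real \<Rightarrow> nat \<Rightarrow> nat \<Rightarrow> nat \<Rightarrow> real" where
  "Bw rr n k j = Pq rr (rr^(k+1)) (Suc n) / Pq rr rr n * (rr^j)^(k+1) * Pq rr (rr^(j+1)) n"

definition aa :: "real \<Rightarrow> nat \<Rightarrow> nat \<Rightarrow> real" where
  "aa rr n k = (1 - rr^(k+1)) / (1 - rr^(n+k+2))"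

definition bb :: "real \<Rightarrow> nat \<Rightarrow> nat \<Rightarrow> real" where
  "bb rr n k = (1 - rr^(k+2)) / (1 - rr^(n+k+3))"

definition Aw :: "real \<Rightarrow> nat \<Rightarrow> real \<Rightarrow> nat \<Rightarrow> real" where
  "Aw rr n x k = Cq rr n k * x^k * Pq rr x (Suc n)"

definition uu :: "real \<Rightarrow> nat \<Rightarrow> nat \<Rightarrow> real" where
  "uu rr n k = (1 - rr^k) / (1 - rr^(n+k))"

definition vv :: "real \<Rightarrow> nat \<Rightarrow> nat \<Rightarrow> real" where
  "vv rr n k = (1 - rr^(k-1)) / (1 - rr^(n+k-1))"

context fixes r :: real assumes r0: "0 < r" and r1: "r < 1"
begin

lemma rpow_le1: "r^m \<le> 1" using r0 r1 by (simp add: power_le_one)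
lemma rpow_pos: "r^m > 0" using r0 by simp
lemma rSuc_lt1: "r * r^m < 1"
proof -
  have "r * r^m \<le> r * 1" using rpow_le1 r0 by (intro mult_left_mono) auto
  then show ?thesis using r1 by simp
qed
lemma rpow_lt1: "m > 0 \<Longrightarrow> r^m < 1"
  by (cases m) (auto simp: rSuc_lt1)
lemma omp_pos: "m > 0 \<Longrightarrow> 1 - r^m > 0" using rpow_lt1 by simp

lemma rSuc_le1: "r * r^m \<le> 1" using rSuc_lt1[of m] by simp
lemmas rfacts = rpow_le1 rpow_pos rSuc_lt1 rSuc_le1

lemma Cq_n0 [simp]: "Cq r 0 k = 1"
proof -
  have "(1 - r^i) \<noteq> 0" if "i \<ge> 1" for i using omp_pos[of i] that by simp
  then show ?thesis unfolding Cq_def by (intro prod.neutral) auto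
qed

lemma Cq_step_n: "Cq r (Suc n) k = Cq r n k * (1 - r^(n+1+k)) / (1 - r^(n+1))"
proof (induction k)
  case 0
  have "1 - r^(n+1) > 0" using omp_pos[of "n+1"] by simp
  then show ?case by simp
next
  case (Suc k)
  have h1: "1 - r^(n+1) \<noteq> 0" "1 - r^(Suc k) \<noteq> 0" "1 - r^(n+1+k) \<noteq> 0"
    using omp_pos[of "n+1"] omp_pos[of "Suc k"] omp_pos[of "n+1+k"] by auto
  have e: "n + Suc k = n+1+k" "Suc n + Suc k = n+1+Suc k" by auto
  show ?case unfolding Cq_Suc Suc e
    by (simp add: field_simps)
qed

lemma Cq_nonneg: "Cq r n k \<ge> 0"
  unfolding Cq_def using omp_pos rpow_le1
  by (intro prod_nonneg) (auto intro!: divide_nonneg_pos)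

lemma Cq_bound: "Cq r n k \<le> (\<Prod>i=1..n. 1 / (1 - r^i))"
proof (induction n)
  case 0 then show ?case by simp
next
  case (Suc n)
  have h: "1 - r^(n+1) > 0" "1 - r^(n+1+k) \<ge> 0" "1 - r^(n+1+k) \<le> 1"
    using omp_pos[of "n+1"] rpow_le1[of "n+1+k"] rpow_pos[of "n+1+k"] by auto
  have "Cq r (Suc n) k = Cq r n k * ((1 - r^(n+1+k)) / (1 - r^(n+1)))"
    using Cq_step_n by simp
  also have "\<dots> \<le> (\<Prod>i=1..n. 1 / (1 - r^i)) * (1 / (1 - r^(n+1)))"
    apply (rule mult_mono)
    using Suc h Cq_nonneg omp_pos rpow_le1 by (auto simp: divide_right_mono intro!: prod_nonneg)
  also have "\<dots> = (\<Prod>i=1..Suc n. 1 / (1 - r^i))" by simp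
  finally show ?case .
qed

lemma Cq_pascal:
  "Cq r (Suc n) (Suc k) = Cq r n (Suc k) + r^(n+1) * Cq r (Suc n) k"
proof -
  have h1: "1 - r^(n+1) \<noteq> 0" "1 - r^(Suc k) \<noteq> 0" "1 - r^(n+1+k) \<noteq> 0"
    using omp_pos[of "n+1"] omp_pos[of "Suc k"] omp_pos[of "n+1+k"] by auto
  have e: "n + Suc k = n+1+k" "Suc n + Suc k = n+1+Suc k" "Suc n + k = n+1+k" by auto
  have "Cq r (Suc n) (Suc k) = Cq r n k*(1 - r*r^n*r^k)/(1 - r*r^n) * (1 - r*r*r^n*r^k)/(1 - r*r^k)"
    unfolding Cq_step_n Cq_Suc e by (simp add: power_add mult_ac)
  also have "\<dots> = Cq r n k*(1 - r*r^n*r^k)/(1-r*r^k) + r*r^n*(Cq r n k*(1 - r*r^n*r^k)/(1 - r*r^n))"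
    by (rule pascal_alg) (use h1 in auto)
  also have "\<dots> = Cq r n (Suc k) + r^(n+1) * Cq r (Suc n) k"
    unfolding Cq_step_n Cq_Suc e by (simp add: power_add mult_ac)
  finally show ?thesis .
qed


lemma Pq_Suc: "Pq r z (Suc m) = Pq r z m * (1 - r^m * z)" by (simp add: Pq_def)

lemma Pq_pos: assumes "0 \<le> z" "z < 1" shows "Pq r z m > 0"
  unfolding Pq_def
proof (intro prod_pos)
  fix i assume "i \<in> {..<m}"
  have "r^i * z \<le> 1 * z" using rpow_le1 assms by (intro mult_right_mono) auto
  then show "0 < 1 - r^i * z" using assms by simp
qed

lemma Cq_summable: assumes "0 \<le> z" "z < 1" shows "summable (\<lambda>k. Cq r n k * z^k)"
proof (rule summable_comparison_test)
  show "\<exists>N. \<forall>k\<ge>N. norm (Cq r n k * z^k) \<le> (\<Prod>i=1..n. 1 / (1 - r^i)) * z^k"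
    using Cq_bound Cq_nonneg assms by (auto intro!: mult_right_mono)
  show "summable (\<lambda>k. (\<Prod>i=1..n. 1 / (1 - r^i)) * z^k)"
    using assms by (intro summable_mult summable_geometric) auto
qed

lemma QB: assumes "0 \<le> z" "z < 1" shows "(\<lambda>k. Cq r n k * z^k) sums (1 / Pq r z (Suc n))"
proof (induction n)
  case 0
  have "(\<lambda>k. z^k) sums (1 / (1 - z))" using assms by (intro geometric_sums) auto
  then show ?case by (simp add: Pq_def)
next
  case (Suc n)
  define S where "S = suminf (\<lambda>k. Cq r (Suc n) k * z^k)"
  have sS: "(\<lambda>k. Cq r (Suc n) k * z^k) sums S"
    unfolding S_def using Cq_summable[OF assms] by (rule summable_sums)
  have a1: "(\<lambda>k. Cq r (Suc n) (Suc k) * z^(Suc k)) sums (S - 1)"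
    using sS by (subst sums_Suc_iff) simp
  have a2: "(\<lambda>k. Cq r n (Suc k) * z^(Suc k)) sums (1 / Pq r z (Suc n) - 1)"
    using Suc by (subst sums_Suc_iff) simp
  have a3: "(\<lambda>k. Cq r n (Suc k) * z^(Suc k) + r^(n+1) * z * (Cq r (Suc n) k * z^k))
     sums (1 / Pq r z (Suc n) - 1 + r^(n+1) * z * S)"
    by (intro sums_add a2 sums_mult sS)
  have "(\<lambda>k. Cq r (Suc n) (Suc k) * z^(Suc k)) =
     (\<lambda>k. Cq r n (Suc k) * z^(Suc k) + r^(n+1) * z * (Cq r (Suc n) k * z^k))"
    by (rule ext) (simp add: Cq_pascal algebra_simps)
  with a1 a3 have eq: "S - 1 = 1 / Pq r z (Suc n) - 1 + r^(n+1) * z * S"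
    using sums_unique2 by metis
  have pos: "Pq r z (Suc n) > 0" using Pq_pos assms by blast
  have q1: "1 - r^(n+1) * z > 0"
  proof -
    have "r^(n+1) * z \<le> 1 * z" using rSuc_le1 assms by (intro mult_right_mono) auto
    then show ?thesis using assms by simp
  qed
  have "S * (1 - r^(n+1) * z) = 1 / Pq r z (Suc n)" using eq by (simp add: algebra_simps)
  then have "S = 1 / (Pq r z (Suc n) * (1 - r^(n+1) * z))" using q1 pos
    by (simp add: field_simps)
  also have "\<dots> = 1 / Pq r z (Suc (Suc n))" by (simp add: Pq_Suc)
  finally show ?case using sS by simp
qed

lemma Pq_shift: "Pq r z (Suc m) = (1 - z) * Pq r (r*z) m"
  unfolding Pq_def prod.lessThan_Suc_shift by (simp add: mult_ac)

lemma Pq_rr_Suc: "Pq r r (Suc n) = Pq r r n * (1 - r^(n+1))"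
  by (simp add: Pq_Suc mult_ac)

lemma Csym: "Pq r (r^(j+1)) n = Cq r n j * Pq r r n"
proof (induction n)
  case 0 then show ?case by (simp add: Pq_def)
next
  case (Suc n)
  have nz: "1 - r^(n+1) \<noteq> 0" using omp_pos[of "n+1"] by simp
  have "Pq r (r^(j+1)) (Suc n) = Pq r (r^(j+1)) n * (1 - r^n * r^(j+1))" by (rule Pq_Suc)
  also have "\<dots> = Cq r n j * Pq r r n * (1 - r^(n+1+j))"
    unfolding Suc by (simp add: power_add mult_ac)
  also have "\<dots> = (Cq r n j * (1 - r^(n+1+j)) / (1 - r^(n+1))) * (Pq r r n * (1 - r^(n+1)))"
    using nz by (simp add: field_simps)
  also have "\<dots> = Cq r (Suc n) j * Pq r r (Suc n)"
    by (simp only: Cq_step_n Pq_rr_Suc)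
  finally show ?case .
qed

lemma rpow_ge0: "0 \<le> r^m" using r0 by simp

lemma inner_sum: assumes "m \<ge> 1"
  shows "(\<lambda>j. (r^m)^j * Pq r (r^(j+1)) n) sums (Pq r r n / Pq r (r^m) (Suc n))"
proof -
  have "(\<lambda>j. Cq r n j * (r^m)^j) sums (1 / Pq r (r^m) (Suc n))"
    using rpow_lt1[of m] assms by (intro QB) (auto simp: rpow_ge0)
  from sums_mult2[OF this, of "Pq r r n"]
  have "(\<lambda>j. Cq r n j * (r^m)^j * Pq r r n) sums (Pq r r n / Pq r (r^m) (Suc n))" by simp
  moreover have "(\<lambda>j. (r^m)^j * Pq r (r^(j+1)) n) = (\<lambda>j. Cq r n j * (r^m)^j * Pq r r n)"
    by (rule ext) (simp only: Csym mult_ac)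
  ultimately show ?thesis by simp
qed


lemma Pq_r_pos: "Pq r (r^m) N > 0" if "m \<ge> 1"
  using Pq_pos[of "r^m" N] rpow_lt1[of m] that rpow_ge0[of m] by auto

lemma Bw_moment: "(\<lambda>j. Bw r n k j * (r^j)^i) sums (Pq r (r^(k+1)) (Suc n) / Pq r (r^(k+1+i)) (Suc n))"
proof -
  have e: "Bw r n k j * (r^j)^i = Pq r (r^(k+1)) (Suc n) / Pq r r n * ((r^(k+1+i))^j * Pq r (r^(j+1)) n)" for j
    unfolding Bw_def by (simp add: power_add power_mult[symmetric] mult_ac power_mult_distrib)
  have pp: "Pq r r n > 0" using Pq_r_pos[of 1 n] by simp
  have "(\<lambda>j. Pq r (r^(k+1)) (Suc n) / Pq r r n * ((r^(k+1+i))^j * Pq r (r^(j+1)) n)) sums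
     (Pq r (r^(k+1)) (Suc n) / Pq r r n * (Pq r r n / Pq r (r^(k+1+i)) (Suc n)))"
    by (intro sums_mult inner_sum) simp
  then show ?thesis using pp unfolding e by simp
qed

lemma Pq_ratio: assumes "0 \<le> z" "z < 1"
  shows "Pq r z (Suc m) / Pq r (r*z) (Suc m) = (1 - z) / (1 - r^(Suc m) * z)"
proof -
  have "r*z \<le> 1*z" using assms r1 by (intro mult_right_mono) auto
  then have rz: "0 \<le> r*z" "r*z < 1" using assms r0 by auto
  have p1: "Pq r (r*z) (Suc m) > 0" using Pq_pos rz by blast
  have q1: "1 - r^(Suc m) * z > 0"
  proof -
    have "r^(Suc m) * z \<le> 1 * z" using rSuc_le1 assms by (intro mult_right_mono) auto
    then show ?thesis using assms by simp
  qed
  have "Pq r z (Suc m) * (1 - r^(Suc m) * z) = (1 - z) * Pq r (r*z) (Suc m)"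
    using Pq_Suc[of z "Suc m"] Pq_shift[of z "Suc m"] by simp
  then show ?thesis using p1 q1 by (simp add: field_simps)
qed


lemma Bw_sum0: "(\<lambda>j. Bw r n k j) sums 1"
proof -
  have "Pq r (r^(k+1)) (Suc n) > 0" using Pq_r_pos[of "k+1"] by simp
  then show ?thesis using Bw_moment[of n k 0] by simp
qed

lemma Bw_sum1: "(\<lambda>j. Bw r n k j * r^j) sums aa r n k"
proof -
  have z: "0 \<le> r^(k+1)" "r^(k+1) < 1" using rpow_ge0[of "k+1"] rpow_lt1[of "k+1"] by auto
  have "Pq r (r^(k+1)) (Suc n) / Pq r (r^(k+1+1)) (Suc n) = aa r n k"
    using Pq_ratio[OF z, of n] unfolding aa_def by (simp add: power_add mult_ac)
  then show ?thesis using Bw_moment[of n k 1] by simp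
qed

lemma Bw_sum2: "(\<lambda>j. Bw r n k j * (r^j)^2) sums (aa r n k * bb r n k)"
proof -
  have z: "0 \<le> r^(k+1)" "r^(k+1) < 1" using rpow_ge0[of "k+1"] rpow_lt1[of "k+1"] by auto
  have z2: "0 \<le> r^(k+2)" "r^(k+2) < 1" using rpow_ge0[of "k+2"] rpow_lt1[of "k+2"] by auto
  have p2: "Pq r (r^(k+2)) (Suc n) > 0" using Pq_r_pos[of "k+2"] by simp
  have h1: "Pq r (r^(k+1)) (Suc n) / Pq r (r^(k+2)) (Suc n) = aa r n k"
    using Pq_ratio[OF z, of n] unfolding aa_def by (simp add: power_add mult_ac)
  have e1: "r * r^(k+2) = r^(k+3)" "r^(Suc n) * r^(k+2) = r^(n+k+3)"
    by (simp_all add: power_add eval_nat_numeral)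
  have h2: "Pq r (r^(k+2)) (Suc n) / Pq r (r^(k+3)) (Suc n) = bb r n k"
    using Pq_ratio[OF z2, of n, unfolded e1] unfolding bb_def by simp
  have dv: "\<And>a b c::real. b \<noteq> 0 \<Longrightarrow> a / c = (a/b) * (b/c)" by simp
  have e3: "k+1+2 = k+3" by simp
  have "Pq r (r^(k+1)) (Suc n) / Pq r (r^(k+1+2)) (Suc n) = aa r n k * bb r n k"
    unfolding e3 h1[symmetric] h2[symmetric] using p2 by (intro dv) simp
  then show ?thesis using Bw_moment[of n k 2] by simp
qed


lemma Aw_sum: assumes "0 \<le> x" "x < 1" shows "(\<lambda>k. Aw r n x k) sums 1"
proof -
  have "Pq r x (Suc n) > 0" using Pq_pos assms by blast
  then show ?thesis using sums_mult2[OF QB[OF assms, of n], of "Pq r x (Suc n)"]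
    unfolding Aw_def by simp
qed

lemma Aw_nonneg: assumes "0 \<le> x" "x < 1" shows "Aw r n x k \<ge> 0"
  unfolding Aw_def using Cq_nonneg Pq_pos[OF assms, of "Suc n"] assms by (intro mult_nonneg_nonneg) (auto simp: less_imp_le)

lemma Cq_uu: assumes "n \<ge> 1" shows "Cq r n (Suc k) * uu r n (Suc k) = Cq r n k"
proof -
  have "1 - r^(n + Suc k) \<noteq> 0" "1 - r^(Suc k) \<noteq> 0"
    using omp_pos[of "n + Suc k"] omp_pos[of "Suc k"] by auto
  then show ?thesis unfolding Cq_Suc uu_def by simp
qed

lemma vv_SS: "vv r n (Suc (Suc k)) = uu r n (Suc k)"
  unfolding vv_def uu_def by simp

lemma Aw_sum_u: assumes "0 \<le> x" "x < 1" "n \<ge> 1"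
  shows "(\<lambda>k. Aw r n x k * uu r n k) sums x"
proof -
  have "(\<lambda>k. Aw r n x (Suc k) * uu r n (Suc k)) = (\<lambda>k. x * Aw r n x k)"
  proof
    fix k
    have "Aw r n x (Suc k) * uu r n (Suc k) = x * ((Cq r n (Suc k) * uu r n (Suc k)) * x^k * Pq r x (Suc n))"
      unfolding Aw_def by (simp add: mult_ac)
    also have "\<dots> = x * Aw r n x k" unfolding Cq_uu[OF assms(3)] Aw_def by simp
    finally show "Aw r n x (Suc k) * uu r n (Suc k) = x * Aw r n x k" .
  qed
  moreover have "(\<lambda>k. x * Aw r n x k) sums x" using sums_mult[OF Aw_sum[OF assms(1,2)], of x] by simp
  ultimately have "(\<lambda>k. Aw r n x (Suc k) * uu r n (Suc k)) sums x" by simp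
  then show ?thesis by (subst (asm) sums_Suc_iff) (simp add: uu_def)
qed

lemma Aw_sum_uv: assumes "0 \<le> x" "x < 1" "n \<ge> 1"
  shows "(\<lambda>k. Aw r n x k * uu r n k * vv r n k) sums (x^2)"
proof -
  have "(\<lambda>k. Aw r n x (Suc (Suc k)) * uu r n (Suc (Suc k)) * vv r n (Suc (Suc k))) = (\<lambda>k. x^2 * Aw r n x k)"
  proof
    fix k
    have "Aw r n x (Suc (Suc k)) * uu r n (Suc (Suc k)) * vv r n (Suc (Suc k)) =
      x^2 * ((Cq r n (Suc (Suc k)) * uu r n (Suc (Suc k))) * uu r n (Suc k) * x^k * Pq r x (Suc n))"
      unfolding Aw_def vv_SS by (simp add: mult_ac power2_eq_square)
    also have "\<dots> = x^2 * Aw r n x k" unfolding Cq_uu[OF assms(3)] Aw_def by (simp add: mult_ac)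
    finally show "Aw r n x (Suc (Suc k)) * uu r n (Suc (Suc k)) * vv r n (Suc (Suc k)) = x^2 * Aw r n x k" .
  qed
  moreover have "(\<lambda>k. x^2 * Aw r n x k) sums (x^2)" using sums_mult[OF Aw_sum[OF assms(1,2)], of "x^2"] by simp
  ultimately have "(\<lambda>k. Aw r n x (Suc (Suc k)) * uu r n (Suc (Suc k)) * vv r n (Suc (Suc k))) sums (x^2)" by simp
  then have "(\<lambda>k. Aw r n x (Suc k) * uu r n (Suc k) * vv r n (Suc k)) sums (x^2)"
    by (subst (asm) sums_Suc_iff) (simp add: vv_def)
  then show ?thesis by (subst (asm) sums_Suc_iff) (simp add: uu_def)
qed
end

lemma abs_sum_le:
  fixes a b :: "nat \<Rightarrow> real"
  assumes "\<And>j. \<bar>a j\<bar> \<le> b j" "b sums s"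
  shows "summable a" "\<bar>suminf a\<bar> \<le> s"
proof -
  show sa: "summable a"
    by (rule summable_comparison_test[of _ b]) (use assms sums_summable in auto)
  have "suminf a \<le> suminf b" using assms sa sums_summable by (intro suminf_le) (auto simp: abs_le_iff)
  moreover have "- suminf a \<le> suminf b"
  proof -
    have "suminf (\<lambda>j. - a j) \<le> suminf b" using assms sa sums_summable
      by (intro suminf_le) (auto simp: abs_le_iff summable_minus)
    then show ?thesis by (simp add: suminf_minus sa)
  qed
  ultimately show "\<bar>suminf a\<bar> \<le> s" using assms(2) sums_unique by (auto simp: abs_le_iff)
qed


context fixes p r q :: real assumes p0: "0 < p" and r0: "0 < r" and r1: "r < 1" and qpr: "q = p * r"
begin

lemma pq_int_r: "pq_int p q m = p^m * (1 - r^m) / (p - q)"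
  unfolding pq_int_def qpr by (simp add: power_mult_distrib algebra_simps)

lemma pq_int_pos: "m \<ge> 1 \<Longrightarrow> pq_int p q m > 0"
  unfolding pq_int_r using omp_pos[OF r0 r1, of m] p0 r1 qpr
  by (intro divide_pos_pos mult_pos_pos) (auto simp: mult_less_cancel_left1)

lemma pq_fact_Suc: "pq_fact p q (Suc m) = pq_fact p q m * pq_int p q (Suc m)"
  by (simp add: pq_fact_def)

lemma pq_fact_pos: "pq_fact p q m > 0"
  unfolding pq_fact_def using pq_int_pos by (intro prod_pos) auto

lemma pq_binom_r: "pq_binom p q (n+k) k = p^(k*n) * Cq r n k"
proof (induction k)
  case 0
  have "pq_fact p q n > 0" by (rule pq_fact_pos)
  moreover have "pq_fact p q 0 = 1" by (simp add: pq_fact_def)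
  ultimately show ?case unfolding pq_binom_def by simp
next
  case (Suc k)
  have f: "pq_fact p q k > 0" "pq_fact p q n > 0" "pq_int p q (Suc k) > 0"
    using pq_fact_pos pq_int_pos by auto
  have pq: "p - q > 0" using qpr p0 r1 by (simp add: mult_less_cancel_left1)
  have o: "1 - r^(Suc k) > 0" using omp_pos[OF r0 r1, of "Suc k"] by simp
  have "pq_binom p q (n + Suc k) (Suc k) =
      pq_binom p q (n+k) k * (pq_int p q (n + Suc k) / pq_int p q (Suc k))"
    unfolding pq_binom_def using f
    by (simp add: pq_fact_Suc[of "n+k", simplified] pq_fact_Suc[of k])
  also have "pq_int p q (n + Suc k) / pq_int p q (Suc k) = p^n * ((1 - r^(n + Suc k)) / (1 - r^(Suc k)))"
  proof -
    have g: "\<And>a b c d e::real. c \<noteq> 0 \<Longrightarrow> (a * b / c) / (d * e / c) = (a/d) * (b/e)" by simp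
    have "p^(n + Suc k) / p^(Suc k) = p^n" using p0 by (simp add: power_add)
    then show ?thesis unfolding pq_int_r using pq by (subst g) auto
  qed
  finally show ?case unfolding Suc Cq_Suc by (simp add: power_add mult_ac)
qed

lemma pq_pow_r: "pq_pow p q 1 (-s) m = p^(\<Sum>j<m. j) * Pq r s m"
proof (induction m)
  case 0 then show ?case by (simp add: pq_pow_def Pq_def)
next
  case (Suc m)
  have "pq_pow p q 1 (-s) (Suc m) = pq_pow p q 1 (-s) m * (p^m - q^m * s)"
    by (simp add: pq_pow_def)
  also have "p^m - q^m * s = p^m * (1 - r^m * s)" unfolding qpr by (simp add: power_mult_distrib algebra_simps)
  finally show ?case unfolding Suc Pq_Suc[OF r0 r1] by (simp add: power_add mult_ac)
qed

end

lemma sum_id_Suc: "(\<Sum>j<Suc n. j) = n * (n+1) div 2"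
proof -
  have "2 * (\<Sum>j<Suc n. j) = n * (n+1)" by (induction n) auto
  then show ?thesis by simp
qed

lemma sum_id_real: "real (\<Sum>j<n. j) = real n * (real n - 1) / 2"
  by (induction n) (simp_all add: field_simps)


context fixes p r q :: real assumes p0: "0 < p" and r0: "0 < r" and r1: "r < 1" and qpr: "q = p * r"
begin

lemma m_pq_r: "m_pq p q n k x = Aw r n x k"
proof -
  have S: "(\<Sum>j<n+1. j) = n * (n+1) div 2" using sum_id_Suc by simp
  have "m_pq p q n k x = (p^(k*n) * p^(n * (n+1) div 2)) / p^(k * n + n * (n + 1) div 2) * (Cq r n k * x^k * Pq r x (n+1))"
    unfolding m_pq_def pq_binom_r[OF p0 r0 r1 qpr] pq_pow_r[OF p0 r0 r1 qpr] S by (simp add: mult_ac)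
  also have "(p^(k*n) * p^(n * (n+1) div 2)) / p^(k * n + n * (n + 1) div 2) = 1"
    using p0 by (simp add: power_add)
  finally show ?thesis unfolding Aw_def by simp
qed

lemma b_pq_r: "b_pq p q n k s = p^(2*k) * Cq r (Suc n) k * s^k * Pq r s n"
proof -
  define E where "E = real k * (real n - 1) + real n * (real n - 1) / 2"
  define S where "S = (\<Sum>j<n. j)"
  have nk: "n + k + 1 = Suc n + k" by simp
  have "b_pq p q n k s = (p^(k * Suc n) * p^S / p powr E) * (Cq r (Suc n) k * s^k * Pq r s n)"
    unfolding b_pq_def nk pq_binom_r[OF p0 r0 r1 qpr] pq_pow_r[OF p0 r0 r1 qpr] E_def S_def
    by (simp add: mult_ac)
  also have "p^(k * Suc n) * p^S / p powr E = p^(2*k)"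
  proof -
    have "p^(k * Suc n) * p^S = p powr (real (k * Suc n) + real S)"
      unfolding powr_add powr_realpow[OF p0] ..
    then have "p^(k * Suc n) * p^S / p powr E = p powr (real (k * Suc n) + real S - E)"
      by (simp add: powr_diff)
    also have "real (k * Suc n) + real S - E = real (2*k)"
      unfolding S_def E_def sum_id_real by (simp add: algebra_simps)
    also have "p powr real (2*k) = p^(2*k)" using p0 by (rule powr_realpow)
    finally show ?thesis .
  qed
  finally show ?thesis by (simp add: mult_ac)
qed

lemma Bw_alt: "Bw r n k j = Cq r (Suc n) k * (1 - r^(n+1)) * (r^j)^(k+1) * Pq r (r^(j+1)) n"
proof -
  have pp: "Pq r r n > 0" using Pq_r_pos[OF r0 r1, of 1 n] by simp
  have "Pq r (r^(k+1)) (Suc n) = Cq r (Suc n) k * (Pq r r n * (1 - r^(n+1)))"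
    using Csym[OF r0 r1, of k "Suc n"] Pq_rr_Suc[OF r0 r1, of n] by simp
  then have e: "Pq r (r^(k+1)) (Suc n) / Pq r r n = Cq r (Suc n) k * (1 - r^(n+1))" using pp by simp
  show ?thesis unfolding Bw_def e by (simp add: mult_ac)
qed

lemma M_repr:
  assumes x: "0 \<le> x" "x < 1" and bd: "\<And>t. \<bar>ext01 f t\<bar> \<le> Bd"
  shows "M_pq p q n f x = suminf (\<lambda>k. Aw r n x k * suminf (\<lambda>j. Bw r n k j * ext01 f (r^j / p)))"
proof -
  define g where "g t = ext01 f t" for t
  define I where "I k = suminf (\<lambda>j. Bw r n k j * g (r^j / p))" for k
  define D where "D = 1 - r^(n+1)"
  have Dp: "D > 0" unfolding D_def using omp_pos[OF r0 r1, of "n+1"] by simp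
  have Bw0: "Bw r n k j \<ge> 0" for k j
    unfolding Bw_alt using Cq_nonneg[OF r0 r1] Dp[unfolded D_def] r0 Pq_pos[OF r0 r1, of "r^(j+1)" n]
      rpow_ge0[OF r0 r1, of "j+1"] rpow_lt1[OF r0 r1, of "j+1"]
    by (intro mult_nonneg_nonneg) auto
  have Ib: "summable (\<lambda>j. Bw r n k j * g (r^j / p)) \<and> \<bar>I k\<bar> \<le> Bd" for k
  proof -
    have "\<bar>Bw r n k j * g (r^j / p)\<bar> \<le> Bw r n k j * Bd" for j
      using Bw0[of k j] bd unfolding g_def by (simp add: abs_mult mult_left_mono)
    from abs_sum_le[OF this sums_mult2[OF Bw_sum0[OF r0 r1], where c=Bd]] show ?thesis
      unfolding I_def by simp
  qed
  have Aw0: "Aw r n x k \<ge> 0" for k using Aw_nonneg[OF r0 r1 x] .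
  have AIs: "summable (\<lambda>k. Aw r n x k * I k)"
  proof -
    have "\<bar>Aw r n x k * I k\<bar> \<le> Aw r n x k * Bd" for k
      using Aw0[of k] Ib[of k] by (simp add: abs_mult mult_left_mono)
    from abs_sum_le(1)[OF this sums_mult2[OF Aw_sum[OF r0 r1 x], where c=Bd]] show ?thesis .
  qed
  define c where "c = (1 - r) / D"
  have termk: "m_pq p q n k x * (p * q) powi (- int k) * pq_integral p q 1 (\<lambda>t. b_pq p q n k (q * t) * g t)
      = c * (Aw r n x k * I k)" for k
  proof -
    define kap where "kap = p^(2*k) * r^k / (p * D)"
    have sj: "q^j / p^(j+1) * (b_pq p q n k (q * (q^j / p^(j+1) * 1)) * g (q^j / p^(j+1) * 1))
       = kap * (Bw r n k j * g (r^j / p))" for j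
    proof -
      have e1: "q^j / p^(j+1) = r^j / p" unfolding qpr using p0 by (simp add: power_mult_distrib)
      have e2: "q * (r^j / p) = r^(j+1)" unfolding qpr using p0 by simp
      have "q^j / p^(j+1) * (b_pq p q n k (q * (q^j / p^(j+1) * 1)) * g (q^j / p^(j+1) * 1))
        = (r^j / p) * (p^(2*k) * Cq r (Suc n) k * (r^k * (r^j)^k) * Pq r (r^(j+1)) n) * g (r^j / p)"
        unfolding e1 mult_1_right e2 b_pq_r by (simp add: power_mult_distrib)
      also have "\<dots> = kap * (Cq r (Suc n) k * D * (r^j * (r^j)^k) * Pq r (r^(j+1)) n * g (r^j / p))"
        unfolding kap_def using Dp p0 by (simp add: field_simps)
      also have "\<dots> = kap * (Bw r n k j * g (r^j / p))"
        unfolding Bw_alt D_def by (simp add: mult_ac)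
      finally show ?thesis .
    qed
    have integ: "pq_integral p q 1 (\<lambda>t. b_pq p q n k (q * t) * g t) = (p - q) * (kap * I k)"
    proof -
      have ex: "(\<lambda>j. q^j / p^(j+1) * (b_pq p q n k (q * (q^j / p^(j+1) * 1)) * g (q^j / p^(j+1) * 1)))
          = (\<lambda>j. kap * (Bw r n k j * g (r^j / p)))"
        by (rule ext) (rule sj)
      show ?thesis unfolding pq_integral_def ex I_def suminf_mult[OF conjunct1[OF Ib[of k]], of kap]
        by simp
    qed
    have pw: "(p * q) powi (- int k) = 1 / (p^(2*k) * r^k)"
      unfolding qpr by (simp add: power_int_minus_divide power_mult_distrib mult_2 power_add)
    have "m_pq p q n k x * (p * q) powi (- int k) * pq_integral p q 1 (\<lambda>t. b_pq p q n k (q * t) * g t)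
      = Aw r n x k * (1 / (p^(2*k) * r^k)) * ((p * (1 - r)) * (p^(2*k) * r^k / (p * D) * I k))"
    proof -
      have pq1: "p - q = p * (1 - r)" unfolding qpr by (simp add: algebra_simps)
      show ?thesis unfolding m_pq_r pw integ kap_def pq1 by (simp add: mult_ac)
    qed
    also have "\<dots> = c * (Aw r n x k * I k)"
      unfolding c_def using p0 Dp r0 by (simp add: field_simps)
    finally show ?thesis .
  qed
  have x1: "x \<noteq> 1" using x by simp
  have "M_pq p q n f x = pq_int p q (n+1) / p^n * suminf (\<lambda>k. c * (Aw r n x k * I k))"
    unfolding M_pq_def using x1 termk unfolding g_def by simp
  also have "\<dots> = pq_int p q (n+1) / p^n * c * suminf (\<lambda>k. Aw r n x k * I k)"
    using suminf_mult[OF AIs, of c] by simp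
  also have "pq_int p q (n+1) / p^n * c = 1"
  proof -
    have pq1: "p - q = p * (1 - r)" unfolding qpr by (simp add: algebra_simps)
    have r1': "1 - r \<noteq> 0" using r1 by simp
    have "pq_int p q (n+1) / p^n = (p^(n+1) / (p * p^n)) * (D / (1 - r))"
      unfolding pq_int_r[OF p0 r0 r1 qpr] D_def pq1 using p0 r1' by (simp add: field_simps)
    also have "p^(n+1) / (p * p^n) = 1" using p0 by simp
    finally have "pq_int p q (n+1) / p^n = D / (1 - r)" by simp
    then show ?thesis unfolding c_def using Dp r1 by simp
  qed
  finally show ?thesis unfolding I_def g_def by simp
qed

end

lemma diff_form:
  fixes r s t :: real
  assumes "0<r" "r<1" "0\<le>s" "s\<le>1" "0\<le>t" "t<1"
  shows "(1-r * s)/(1-r * s * t) - (1-s)/(1-s * t) = (1-r) * s * (1-t)/((1-s * t) * (1-r * s * t))"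
proof -
  have "s * t \<le> 1 * t" using assms by (intro mult_right_mono) auto
  then have a: "1 - s * t > 0" using assms by simp
  have "r * s * t \<le> 1 * t" using assms by (intro mult_right_mono) (auto simp: mult_le_one)
  then have b: "1 - r * s * t > 0" using assms by simp
  show ?thesis using a b by (simp add: field_simps)
qed

lemma diff_bound:
  fixes r s t :: real
  assumes "0<r" "r<1" "0\<le>s" "s\<le>1" "0\<le>t" "t<1"
  shows "0 \<le> (1-r * s)/(1-r * s * t) - (1-s)/(1-s * t)"
    and "(1-r * s)/(1-r * s * t) - (1-s)/(1-s * t) \<le> (1-r)/(1-r * s * t)"
proof -
  have "s * t \<le> 1 * t" using assms by (intro mult_right_mono) auto
  then have a: "1 - s * t > 0" using assms by simp
  have "r * s * t \<le> 1 * t" using assms by (intro mult_right_mono) (auto simp: mult_le_one)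
  then have b: "1 - r * s * t > 0" using assms by simp
  note e = diff_form[OF assms]
  show "0 \<le> (1-r * s)/(1-r * s * t) - (1-s)/(1-s * t)" unfolding e using a b assms
    by (intro divide_nonneg_pos mult_nonneg_nonneg) auto
  have c: "s * (1-t) \<le> 1 - s * t" using assms by (simp add: algebra_simps)
  have "(1-r) * s * (1-t)/((1-s * t) * (1-r * s * t)) = ((1-r)/(1-r * s * t)) * (s * (1-t)/(1-s * t))"
    by (simp add: field_simps)
  also have "\<dots> \<le> ((1-r)/(1-r * s * t)) * 1"
    apply (rule mult_left_mono)
    using a b c assms by auto
  finally show "(1-r * s)/(1-r * s * t) - (1-s)/(1-s * t) \<le> (1-r)/(1-r * s * t)" unfolding e by simp
qed

lemma abs_diff_le: fixes P Q a :: real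
  shows "0 \<le> P \<Longrightarrow> P \<le> a \<Longrightarrow> 0 \<le> Q \<Longrightarrow> Q \<le> 2 * a \<Longrightarrow> \<bar>P - Q\<bar> \<le> 3 * a"
  by (simp add: abs_le_iff)

lemma au_bound:
  fixes r w T :: real
  assumes "0<r" "r<1" "0\<le>w" "w\<le>1" "0\<le>T" "T<1"
  shows "\<bar>(1 - r * w)/(1 - r * r * T * w) - (1-w)/(1-T * w)\<bar> \<le> 3 * (1-r)/(1-T)"
proof -
  have "T * w \<le> T * 1" using assms by (intro mult_left_mono) auto
  then have E: "1 - T * w \<ge> 1 - T" by simp
  have "r * r * T * w \<le> 1 * T * 1" using assms by (intro mult_mono) (auto simp: mult_le_one)
  then have D: "1 - r * r * T * w \<ge> 1 - T" by simp
  have T1: "1 - T > 0" using assms by simp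
  have Ep: "1 - T * w > 0" using E T1 by linarith
  have Dp: "1 - r * r * T * w > 0" using D T1 by linarith
  have nz: "1 - r * r * T * w \<noteq> 0" "1 - T * w \<noteq> 0" using Ep Dp by auto
  define D where "D = 1 - r * r * T * w"
  define E where "E = 1 - T * w"
  have nz': "D \<noteq> 0" "E \<noteq> 0" using nz unfolding D_def E_def by auto
  have l: "(1 - r * w)/D - (1-w)/E = ((1 - r * w) * E - (1-w) * D)/(D * E)"
    using nz' by (rule diff_frac_eq)
  have rr: "(1-r) * w/D - (1-r) * (1+r) * w * (T * (1-w)/E)/D = ((1-r) * w * E - (1-r) * (1+r) * w * T * (1-w))/(D * E)"
    using nz' by (simp add: field_simps)
  have num: "(1 - r * w) * E - (1-w) * D = (1-r) * w * E - (1-r) * (1+r) * w * T * (1-w)"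
    unfolding D_def E_def by (simp add: algebra_simps)
  have eq: "(1 - r * w)/(1 - r * r * T * w) - (1-w)/(1-T * w) =
     (1-r) * w/(1 - r * r * T * w) - (1-r) * (1+r) * w * (T * (1-w)/(1-T * w))/(1 - r * r * T * w)"
    using l rr num unfolding D_def E_def by simp
  have t1: "0 \<le> (1-r) * w/(1 - r * r * T * w)" "(1-r) * w/(1 - r * r * T * w) \<le> (1-r)/(1-T)"
  proof -
    show "0 \<le> (1-r) * w/(1 - r * r * T * w)" using assms Dp by auto
    have "(1-r) * w \<le> (1-r) * 1" using assms by (intro mult_left_mono) auto
    then have "(1-r) * w/(1 - r * r * T * w) \<le> (1-r)/(1 - r * r * T * w)" using Dp by (simp add: divide_right_mono)
    also have "\<dots> \<le> (1-r)/(1-T)" using D T1 assms by (intro divide_left_mono) auto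
    finally show "(1-r) * w/(1 - r * r * T * w) \<le> (1-r)/(1-T)" .
  qed
  have q0: "0 \<le> T * (1-w)" using assms by simp
  have q1: "T * (1-w) \<le> 1 - T * w" using assms by (simp add: algebra_simps)
  have q: "0 \<le> T * (1-w)/(1-T * w)" "T * (1-w)/(1-T * w) \<le> 1"
    using q0 q1 Ep by (auto simp: divide_le_eq)
  have t2: "0 \<le> (1-r) * (1+r) * w * (T * (1-w)/(1-T * w))/(1 - r * r * T * w)"
    "(1-r) * (1+r) * w * (T * (1-w)/(1-T * w))/(1 - r * r * T * w) \<le> 2 * (1-r)/(1-T)"
  proof -
    show "0 \<le> (1-r) * (1+r) * w * (T * (1-w)/(1-T * w))/(1 - r * r * T * w)" using assms q Dp Ep
      by (intro divide_nonneg_pos mult_nonneg_nonneg) (auto simp del: times_divide_eq_right)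
    have "(1-r) * (1+r) * w * (T * (1-w)/(1-T * w)) \<le> (1-r) * 2 * 1 * 1"
      using assms q by (intro mult_mono) auto
    then have "(1-r) * (1+r) * w * (T * (1-w)/(1-T * w))/(1 - r * r * T * w) \<le> 2 * (1-r)/(1 - r * r * T * w)"
      using Dp by (intro divide_right_mono) (auto simp del: times_divide_eq_right)
    also have "\<dots> \<le> 2 * (1-r)/(1-T)" using D T1 assms by (intro divide_left_mono) auto
    finally show "(1-r) * (1+r) * w * (T * (1-w)/(1-T * w))/(1 - r * r * T * w) \<le> 2 * (1-r)/(1-T)" .
  qed
  have e23: "3 * (1-r)/(1-T) = 3 * ((1-r)/(1-T))" "2 * (1-r)/(1-T) = 2 * ((1-r)/(1-T))" by simp_all
  show ?thesis unfolding eq e23 by (rule abs_diff_le[OF t1 t2[unfolded e23]])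
qed

lemma inner_bound:
  fixes a b u v x rho e :: real
  assumes "0 \<le> a" "a \<le> 1" "0 \<le> b - a" "b - a \<le> e" "\<bar>a - u\<bar> \<le> 3 * e"
    "0 \<le> u" "u \<le> 1" "0 \<le> u - v" "u - v \<le> e" "1 \<le> rho" "0 \<le> e"
  shows "a * b * rho^2 - 2 * x * rho * a + x^2 \<le> 2 * (rho-1+3 * e)^2 + e * rho^2 + 2 * (u * v + e * u - 2 * x * u + x^2)"
proof -
  have i1: "a * b * rho^2 - 2 * x * rho * a + x^2 = (rho * a - x)^2 + rho^2 * (a * (b-a))"
    by (simp add: algebra_simps power2_eq_square)
  have "a * (b-a) \<le> 1 * e" using assms by (intro mult_mono) auto
  then have i2: "rho^2 * (a * (b-a)) \<le> rho^2 * e" by (intro mult_left_mono) auto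
  have i3a: "(rho * a - x)^2 = 2 * (rho * a - u)^2 + 2 * (u-x)^2 - (rho * a - 2 * u + x)^2"
    by (simp add: algebra_simps power2_eq_square)
  have i3: "(rho * a - x)^2 \<le> 2 * (rho * a - u)^2 + 2 * (u-x)^2"
    unfolding i3a by simp
  have "rho * a - u = (rho-1) * a + (a-u)" by (simp add: algebra_simps)
  then have "\<bar>rho * a - u\<bar> \<le> \<bar>(rho-1) * a\<bar> + \<bar>a - u\<bar>" by (metis abs_triangle_ineq)
  also have "\<bar>(rho-1) * a\<bar> = (rho-1) * a" using assms by simp
  finally have "\<bar>rho * a - u\<bar> \<le> (rho-1) * a + \<bar>a - u\<bar>" .
  also have "\<dots> \<le> (rho-1) * 1 + 3 * e" using assms by (intro add_mono mult_left_mono) auto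
  finally have i4a: "\<bar>rho * a - u\<bar> \<le> rho-1+3 * e" by simp
  have i4: "(rho * a - u)^2 \<le> (rho-1+3 * e)^2"
  proof -
    have "(rho * a - u)^2 = \<bar>rho * a - u\<bar>^2" by simp
    also have "\<dots> \<le> (rho-1+3 * e)^2" by (rule power_mono[OF i4a abs_ge_zero])
    finally show ?thesis .
  qed
  have i5: "u * u \<le> u * v + e * u"
  proof -
    have "u * (u-v) \<le> u * e" using assms by (intro mult_left_mono) auto
    then show ?thesis by (simp add: algebra_simps)
  qed
  have i6: "(u-x)^2 = u * u - 2 * x * u + x^2" by (simp add: algebra_simps power2_eq_square)
  have i2': "rho^2 * (a * (b-a)) \<le> e * rho^2" using i2 by (simp add: mult.commute)
  have "a * b * rho^2 - 2 * x * rho * a + x^2 \<le> 2 * (rho * a - u)^2 + 2 * (u-x)^2 + e * rho^2"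
    unfolding i1 using i3 i2' by linarith
  also have "\<dots> \<le> 2 * (rho-1+3 * e)^2 + 2 * (u * u - 2 * x * u + x^2) + e * rho^2"
    unfolding i6 using i4 by linarith
  also have "\<dots> \<le> 2 * (rho-1+3 * e)^2 + e * rho^2 + 2 * (u * v + e * u - 2 * x * u + x^2)"
  proof -
    have "2 * (u * u - 2 * x * u + x^2) \<le> 2 * (u * v + e * u - 2 * x * u + x^2)" using i5 by simp
    then show ?thesis by linarith
  qed
  finally show ?thesis .
qed
lemma kor:
  fixes A R :: "nat \<Rightarrow> real" and B :: "nat \<Rightarrow> nat \<Rightarrow> real" and t G :: "nat \<Rightarrow> real"
    and m2 :: "nat \<Rightarrow> real"
  assumes A0: "\<And>k. A k \<ge> 0" and A1: "A sums 1"
    and B0: "\<And>k j. B k j \<ge> 0" and B1: "\<And>k. B k sums 1"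
    and Bm: "\<And>k. (\<lambda>j. B k j * (t j - x)^2) sums m2 k"
    and AR: "\<And>k. A k * m2 k \<le> R k" and Rs: "R sums Rs"
    and G: "\<And>j. \<bar>G j - y\<bar> \<le> eps + c * (t j - x)^2" and c: "c \<ge> 0"
  shows "\<bar>suminf (\<lambda>k. A k * suminf (\<lambda>j. B k j * G j)) - y\<bar> \<le> eps + c * Rs"
proof -
  define I where "I k = suminf (\<lambda>j. B k j * G j)" for k
  have inner: "summable (\<lambda>j. B k j * (G j - y)) \<and> \<bar>I k - y\<bar> \<le> eps + c * m2 k" for k
  proof -
    have H: "(\<lambda>j. B k j * eps + c * (B k j * (t j - x)^2)) sums (1 * eps + c * m2 k)"
      by (intro sums_add sums_mult sums_mult2 B1 Bm)
    have hb: "\<bar>B k j * (G j - y)\<bar> \<le> B k j * eps + c * (B k j * (t j - x)^2)" for j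
    proof -
      have "\<bar>B k j * (G j - y)\<bar> = B k j * \<bar>G j - y\<bar>" using B0 by (simp add: abs_mult)
      also have "\<dots> \<le> B k j * (eps + c * (t j - x)^2)" using B0 G by (intro mult_left_mono) auto
      finally show ?thesis by (simp add: algebra_simps)
    qed
    note ab = abs_sum_le[of "\<lambda>j. B k j * (G j - y)", OF hb H]
    have "(\<lambda>j. B k j * G j) = (\<lambda>j. B k j * (G j - y) + B k j * y)" by (simp add: algebra_simps)
    moreover have "(\<lambda>j. B k j * (G j - y) + B k j * y) sums (suminf (\<lambda>j. B k j * (G j - y)) + 1 * y)"
      by (intro sums_add summable_sums ab(1) sums_mult2 B1)
    ultimately have "I k = suminf (\<lambda>j. B k j * (G j - y)) + y" unfolding I_def by (simp add: sums_iff)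
    then show ?thesis using ab by simp
  qed
  have Q: "(\<lambda>k. A k * eps + c * R k) sums (1 * eps + c * Rs)"
    by (intro sums_add sums_mult sums_mult2 A1 Rs)
  have qb: "\<bar>A k * (I k - y)\<bar> \<le> A k * eps + c * R k" for k
  proof -
    have "\<bar>A k * (I k - y)\<bar> = A k * \<bar>I k - y\<bar>" using A0 by (simp add: abs_mult)
    also have "\<dots> \<le> A k * (eps + c * m2 k)" using A0 inner by (intro mult_left_mono) auto
    also have "\<dots> = A k * eps + c * (A k * m2 k)" by (simp add: algebra_simps)
    also have "\<dots> \<le> A k * eps + c * R k" using AR c by (intro add_left_mono mult_left_mono) auto
    finally show ?thesis .
  qed
  note ab = abs_sum_le[of "\<lambda>k. A k * (I k - y)", OF qb Q]
  have "(\<lambda>k. A k * I k) = (\<lambda>k. A k * (I k - y) + A k * y)" by (simp add: algebra_simps)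
  moreover have "(\<lambda>k. A k * (I k - y) + A k * y) sums (suminf (\<lambda>k. A k * (I k - y)) + 1 * y)"
    by (intro sums_add summable_sums ab(1) sums_mult2 A1)
  ultimately have "suminf (\<lambda>k. A k * I k) = suminf (\<lambda>k. A k * (I k - y)) + y" by (simp add: sums_iff)
  then show ?thesis using ab unfolding I_def by simp
qed

context fixes r :: real assumes r0: "0 < r" and r1: "r < 1"
begin

lemma rp_le: "m \<le> M \<Longrightarrow> r^M \<le> r^m" using r0 r1 by (intro power_decreasing) auto

lemma aa_bounds: "0 \<le> aa r n k" "aa r n k \<le> 1"
proof -
  have d: "1 - r^(n+k+2) > 0" using omp_pos[OF r0 r1, of "n+k+2"] by simp
  have n0: "1 - r^(k+1) \<ge> 0" using rpow_le1[OF r0 r1, of "k+1"] by simp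
  have "r^(n+k+2) \<le> r^(k+1)" by (rule rp_le) simp
  then have le: "1 - r^(k+1) \<le> 1 - r^(n+k+2)" by simp
  show "0 \<le> aa r n k" unfolding aa_def by (intro divide_nonneg_pos n0 d)
  show "aa r n k \<le> 1" unfolding aa_def by (metis divide_le_eq_1_pos d le)
qed

lemma uu_bounds: assumes "n \<ge> 1" shows "0 \<le> uu r n k" "uu r n k \<le> 1"
proof -
  have d: "1 - r^(n+k) > 0" using omp_pos[OF r0 r1, of "n+k"] assms by simp
  have n0: "1 - r^k \<ge> 0" using rpow_le1[OF r0 r1, of "k"] by simp
  have "r^(n+k) \<le> r^k" by (rule rp_le) simp
  then have le: "1 - r^k \<le> 1 - r^(n+k)" by simp
  show "0 \<le> uu r n k" unfolding uu_def by (intro divide_nonneg_pos n0 d)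
  show "uu r n k \<le> 1" unfolding uu_def by (metis divide_le_eq_1_pos d le)
qed

lemma ee_mono: assumes "n \<ge> 1" "n \<le> m" shows "(1 - r)/(1 - r^m) \<le> (1-r)/(1 - r^n)"
proof -
  have a: "1 - r^n > 0" using omp_pos[OF r0 r1, of n] assms by simp
  have b: "1 - r^m > 0" using omp_pos[OF r0 r1, of m] assms by simp
  have "r^m \<le> r^n" using rp_le assms by simp
  then have c: "1 - r^n \<le> 1 - r^m" by simp
  have d: "0 \<le> 1 - r" using r1 by simp
  show ?thesis by (rule divide_left_mono[OF c d mult_pos_pos[OF b a]])
qed

lemma pw2: "a + b = c \<Longrightarrow> (x::real)^a * x^b = x^c" by (metis power_add)
lemma pw3: "a + b = c \<Longrightarrow> (x::real) * x^a * x^b = x^(Suc c)" by (auto simp: power_add)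

lemma ba_bounds: assumes "n \<ge> 1"
  shows "0 \<le> bb r n k - aa r n k" "bb r n k - aa r n k \<le> (1-r)/(1 - r^n)"
proof -
  define s where "s = r^(k+1)"
  define t where "t = r^(n+1)"
  have st: "0 \<le> s" "s \<le> 1" "0 \<le> t" "t < 1"
    unfolding s_def t_def using rpow_le1[OF r0 r1, of "k+1"] rpow_ge0[OF r0 r1, of "k+1"]
      rpow_ge0[OF r0 r1, of "n+1"] rpow_lt1[OF r0 r1, of "n+1"] by auto
  have x1: "s * t = r^(n+k+2)" unfolding s_def t_def by (rule pw2) simp
  have x2: "r * s = r^(k+2)" unfolding s_def by simp
  have x3: "r * s * t = r^(n+k+3)" unfolding s_def t_def
  proof -
    have "r * r^(k+1) * r^(n+1) = r^(Suc (n+k+2))" by (rule pw3) simp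
    then show "r * r^(k+1) * r^(n+1) = r^(n+k+3)" by (simp add: eval_nat_numeral)
  qed
  have ea: "aa r n k = (1-s)/(1-s * t)" unfolding aa_def x1 unfolding s_def ..
  have eb: "bb r n k = (1-r * s)/(1-r * s * t)" unfolding bb_def x3[symmetric] x2[symmetric] ..
  note db = diff_bound[OF r0 r1 st]
  show "0 \<le> bb r n k - aa r n k" unfolding ea eb using db(1) .
  have "bb r n k - aa r n k \<le> (1-r)/(1-r * s * t)" unfolding ea eb using db(2) .
  also have "\<dots> = (1-r)/(1 - r^(n+k+3))" unfolding x3 ..
  also have "\<dots> \<le> (1-r)/(1 - r^n)" by (rule ee_mono) (use assms in auto)
  finally show "bb r n k - aa r n k \<le> (1-r)/(1 - r^n)" .
qed

lemma uv_bounds: assumes "n \<ge> 1"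
  shows "0 \<le> uu r n k - vv r n k" "uu r n k - vv r n k \<le> (1-r)/(1 - r^n)"
proof -
  have e0: "0 \<le> (1-r)/(1 - r^n)" using omp_pos[OF r0 r1, of n] assms r1 by simp
  have "0 \<le> uu r n k - vv r n k \<and> uu r n k - vv r n k \<le> (1-r)/(1 - r^n)"
  proof (cases k)
    case 0 then show ?thesis using e0 by (simp add: uu_def vv_def)
  next
    case (Suc k')
    define s where "s = r^k'"
    define t where "t = r^n"
    have st: "0 \<le> s" "s \<le> 1" "0 \<le> t" "t < 1"
      unfolding s_def t_def using rpow_le1[OF r0 r1, of k'] rpow_ge0[OF r0 r1, of k'] rpow_ge0[OF r0 r1, of n] rpow_lt1[OF r0 r1, of n] assms by auto
    have x1: "s * t = r^(n+k-1)" unfolding s_def t_def Suc by (rule pw2) simp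
    have x2: "r * s = r^k" unfolding s_def Suc by simp
    have x3: "r * s * t = r^(n+k)"
    proof -
      have "r * r^k' * r^n = r^(Suc (k'+n))" by (rule pw3) simp
      then show ?thesis unfolding s_def t_def Suc by (simp add: add.commute)
    qed
    have eu: "uu r n k = (1-r * s)/(1-r * s * t)" unfolding uu_def x3[symmetric] x2[symmetric] ..
    have k1: "k - 1 = k'" using Suc by simp
    have ev: "vv r n k = (1-s)/(1-s * t)" unfolding vv_def x1 unfolding s_def k1 ..
    note db = diff_bound[OF r0 r1 st]
    have "uu r n k - vv r n k \<le> (1-r)/(1-r * s * t)" unfolding eu ev using db(2) .
    also have "\<dots> = (1-r)/(1 - r^(n+k))" unfolding x3 ..
    also have "\<dots> \<le> (1-r)/(1 - r^n)" by (rule ee_mono) (use assms in auto)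
    finally show ?thesis unfolding eu ev using db(1) by simp
  qed
  then show "0 \<le> uu r n k - vv r n k" "uu r n k - vv r n k \<le> (1-r)/(1 - r^n)" by auto
qed

lemma au_bounds: assumes "n \<ge> 1"
  shows "\<bar>aa r n k - uu r n k\<bar> \<le> 3 * ((1-r)/(1 - r^n))"
proof -
  define w where "w = r^k"
  define T where "T = r^n"
  have wT: "0 \<le> w" "w \<le> 1" "0 \<le> T" "T < 1"
    unfolding w_def T_def using rpow_le1[OF r0 r1, of k] rpow_ge0[OF r0 r1, of k] rpow_ge0[OF r0 r1, of n] rpow_lt1[OF r0 r1, of n] assms by auto
  have x1: "r * r * T * w = r^(n+k+2)"
  proof -
    have "r * r^n * r^k = r^(Suc (n+k))" by (rule pw3) simp
    then have "r * (r * r^n * r^k) = r^(n+k+2)" by (simp add: eval_nat_numeral)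
    then show ?thesis unfolding T_def w_def by (simp add: mult.assoc)
  qed
  have x2: "T * w = r^(n+k)" unfolding T_def w_def by (rule pw2) simp
  have x3: "r * w = r^(k+1)" unfolding w_def by simp
  have ea: "aa r n k = (1 - r * w)/(1 - r * r * T * w)" unfolding aa_def x1 x3 ..
  have eu: "uu r n k = (1-w)/(1-T * w)" unfolding uu_def x2 unfolding w_def ..
  show ?thesis unfolding ea eu times_divide_eq_right T_def[symmetric] by (rule au_bound[OF r0 r1 wT])
qed

end

lemma main_bound:
  fixes p q r x Bd eps c :: real and f :: "real \<Rightarrow> real"
  assumes p0: "0 < p" and p1: "p \<le> 1" and r0: "0 < r" and r1: "r < 1" and qpr: "q = p * r"
    and n1: "n \<ge> 1" and x0: "0 \<le> x" and x1: "x < 1"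
    and bd: "\<And>t. \<bar>ext01 f t\<bar> \<le> Bd"
    and G: "\<And>t. \<bar>ext01 f t - f x\<bar> \<le> eps + c * (t - x)^2" and c0: "c \<ge> 0"
  shows "\<bar>M_pq p q n f x - f x\<bar> \<le> eps + c * (2 * (1/p - 1 + 3 * ((1-r)/(1-r^n)))^2
           + ((1-r)/(1-r^n)) * (1/p)^2 + 2 * ((1-r)/(1-r^n)))"
proof -
  define e where "e = (1-r)/(1-r^n)"
  define rho where "rho = 1/p"
  define K0 where "K0 = 2 * (rho - 1 + 3 * e)^2 + e * rho^2"
  define m2 where "m2 k = aa r n k * bb r n k * rho^2 - 2 * x * rho * aa r n k + x^2" for k
  define R where "R k = K0 * Aw r n x k + 2 * (Aw r n x k * uu r n k * vv r n k)
      + (2 * e) * (Aw r n x k * uu r n k) - (4 * x) * (Aw r n x k * uu r n k) + (2 * x^2) * Aw r n x k" for k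
  define Rs where "Rs = K0 * 1 + 2 * x^2 + (2 * e) * x - (4 * x) * x + (2 * x^2) * 1"
  have e0: "0 \<le> e" unfolding e_def using omp_pos[OF r0 r1, of n] n1 r1 by simp
  have rho1: "1 \<le> rho" unfolding rho_def using p0 p1 by simp
  have Bm: "(\<lambda>j. Bw r n k j * (r^j / p - x)^2) sums m2 k" for k
  proof -
    have s: "(\<lambda>j. (Bw r n k j * (r^j)^2) * rho^2 - (Bw r n k j * r^j) * (2 * x * rho) + Bw r n k j * x^2)
       sums ((aa r n k * bb r n k) * rho^2 - aa r n k * (2 * x * rho) + 1 * x^2)"
      by (intro sums_add sums_diff sums_mult2 Bw_sum0[OF r0 r1] Bw_sum1[OF r0 r1] Bw_sum2[OF r0 r1])
    have "(\<lambda>j. Bw r n k j * (r^j / p - x)^2) =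
        (\<lambda>j. (Bw r n k j * (r^j)^2) * rho^2 - (Bw r n k j * r^j) * (2 * x * rho) + Bw r n k j * x^2)"
      unfolding rho_def by (rule ext) (simp add: power2_eq_square algebra_simps)
    moreover have "(aa r n k * bb r n k) * rho^2 - aa r n k * (2 * x * rho) + 1 * x^2 = m2 k"
      unfolding m2_def by (simp add: algebra_simps)
    ultimately show ?thesis using s by simp
  qed
  have AR: "Aw r n x k * m2 k \<le> R k" for k
  proof -
    have "m2 k \<le> 2 * (rho-1+3 * e)^2 + e * rho^2 + 2 * (uu r n k * vv r n k + e * uu r n k - 2 * x * uu r n k + x^2)"
      unfolding m2_def
      using inner_bound[OF aa_bounds[OF r0 r1] ba_bounds[OF r0 r1 n1, folded e_def]
          au_bounds[OF r0 r1 n1, folded e_def] uu_bounds[OF r0 r1 n1] uv_bounds[OF r0 r1 n1, folded e_def] rho1 e0]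
      by simp
    then have "Aw r n x k * m2 k \<le> Aw r n x k * (K0 + 2 * (uu r n k * vv r n k + e * uu r n k - 2 * x * uu r n k + x^2))"
      unfolding K0_def using Aw_nonneg[OF r0 r1 x0 x1] by (intro mult_left_mono) auto
    also have "\<dots> = R k" unfolding R_def by (simp add: algebra_simps)
    finally show ?thesis .
  qed
  have Rsum: "R sums Rs"
    unfolding R_def Rs_def
    by (intro sums_add sums_diff sums_mult Aw_sum[OF r0 r1 x0 x1] Aw_sum_u[OF r0 r1 x0 x1 n1]
        Aw_sum_uv[OF r0 r1 x0 x1 n1])
  have Ab: "\<And>k. Aw r n x k \<ge> 0" using Aw_nonneg[OF r0 r1 x0 x1] .
  have Bb: "\<And>k j. Bw r n k j \<ge> 0"
  proof -
    fix k j
    have Dp: "1 - r^(n+1) > 0" using omp_pos[OF r0 r1, of "n+1"] by simp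
    show "Bw r n k j \<ge> 0"
      unfolding Bw_alt[OF p0 r0 r1 qpr] using Cq_nonneg[OF r0 r1] Dp r0 Pq_pos[OF r0 r1, of "r^(j+1)" n]
        rpow_ge0[OF r0 r1, of "j+1"] rpow_lt1[OF r0 r1, of "j+1"]
      by (intro mult_nonneg_nonneg) auto
  qed
  have K: "\<bar>suminf (\<lambda>k. Aw r n x k * suminf (\<lambda>j. Bw r n k j * ext01 f (r^j / p))) - f x\<bar> \<le> eps + c * Rs"
    by (rule kor[OF Ab Aw_sum[OF r0 r1 x0 x1] Bb Bw_sum0[OF r0 r1] Bm AR Rsum G c0])
  have Rs_le: "Rs \<le> K0 + 2 * e"
  proof -
    have "Rs = K0 + 2 * e * x" unfolding Rs_def by (simp add: algebra_simps power2_eq_square)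
    also have "\<dots> \<le> K0 + 2 * e * 1" using e0 x1 by (intro add_left_mono mult_left_mono) auto
    finally show ?thesis by simp
  qed
  have "\<bar>M_pq p q n f x - f x\<bar> \<le> eps + c * Rs"
    using K unfolding M_repr[OF p0 r0 r1 qpr x0 x1 bd] .
  also have "\<dots> \<le> eps + c * (K0 + 2 * e)" using Rs_le c0 by (intro add_left_mono mult_left_mono) auto
  finally show ?thesis unfolding K0_def e_def rho_def .
qed

theorem theorem2:
  fixes p q :: "nat \<Rightarrow> real" and a b :: real and f :: "real \<Rightarrow> real"
  assumes "\<And>n. 0 < q n \<and> q n < 1"
    and "\<And>n. q n < p n \<and> p n \<le> 1"
    and "p \<longlonglongrightarrow> 1" and "q \<longlonglongrightarrow> 1"
    and "(\<lambda>n. p n ^ n) \<longlonglongrightarrow> a"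
    and "(\<lambda>n. q n ^ n) \<longlonglongrightarrow> b"
    and "(\<lambda>n. 1 / pq_int (p n) (q n) n) \<longlonglongrightarrow> 0"
    and "continuous_on {0..1} f"
  shows "uniform_limit {0..1} (\<lambda>n x. M_pq (p n) (q n) n f x) f sequentially"
proof -
  note qa = assms(1) and pa = assms(2) and plim = assms(3) and ilim = assms(7) and cont = assms(8)
  define r where "r n = q n / p n" for n
  have p0: "0 < p n" for n using qa[of n] pa[of n] by linarith
  have p1: "p n \<le> 1" for n using pa[of n] by simp
  have r0: "0 < r n" for n unfolding r_def using qa[of n] p0[of n] by simp
  have r1: "r n < 1" for n unfolding r_def using pa[of n] p0[of n] by simp
  have qpr: "q n = p n * r n" for n unfolding r_def using p0[of n] by simp
  define e where "e n = (1 - r n) / (1 - r n ^ n)" for n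
  have e_le: "0 \<le> e n \<and> e n \<le> 1 / pq_int (p n) (q n) n" if n1: "n \<ge> 1" for n
  proof -
    have o: "1 - r n ^ n > 0" using omp_pos[OF r0 r1, of n] n1 by simp
    have e0: "0 \<le> e n" unfolding e_def using o r1[of n] by simp
    have pq1: "p n - q n = p n * (1 - r n)" unfolding qpr by (simp add: algebra_simps)
    have eq: "1 / pq_int (p n) (q n) n = (p n / p n ^ n) * e n"
      unfolding pq_int_r[OF p0 r0 r1 qpr] pq1 e_def using p0[of n] o r1[of n] by (simp add: field_simps)
    have pn: "p n ^ n \<le> p n"
    proof -
      have "p n ^ n = p n * p n ^ (n - 1)" using n1 by (simp add: power_eq_if)
      also have "\<dots> \<le> p n * 1" using p0[of n] p1[of n] by (intro mult_left_mono power_le_one) auto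
      finally show ?thesis by simp
    qed
    have "1 \<le> p n / p n ^ n" using pn p0[of n] by simp
    then have "1 * e n \<le> (p n / p n ^ n) * e n" using e0 by (intro mult_right_mono) auto
    then show ?thesis using e0 eq by simp
  qed
  have elim: "e \<longlonglongrightarrow> 0"
  proof (rule Lim_null_comparison[OF _ ilim])
    show "\<forall>\<^sub>F n in sequentially. norm (e n) \<le> 1 / pq_int (p n) (q n) n"
      using eventually_ge_at_top[of 1] by eventually_elim (use e_le in auto)
  qed
  define beta where "beta n = 2 * (1/p n - 1 + 3 * e n)^2 + e n * (1/p n)^2 + 2 * e n" for n
  have blim: "beta \<longlonglongrightarrow> 0"
  proof -
    have "beta \<longlonglongrightarrow> 2 * (1/1 - 1 + 3 * 0)^2 + 0 * (1/1)^2 + 2 * 0"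
      unfolding beta_def by (intro tendsto_intros plim elim) simp_all
    then show ?thesis by simp
  qed
  have "bounded (f ` {0..1})"
    by (rule compact_imp_bounded[OF compact_continuous_image[OF cont compact_Icc]])
  then obtain Bd where Bd0: "Bd > 0" and Bd: "\<And>x. x \<in> {0..1} \<Longrightarrow> \<bar>f x\<bar> \<le> Bd"
    unfolding bounded_pos by auto
  have bd: "\<bar>ext01 f t\<bar> \<le> Bd" for t unfolding ext01_def by (rule Bd) auto
  have uc: "uniformly_continuous_on {0..1} f"
    by (rule compact_uniformly_continuous[OF cont compact_Icc])
  show ?thesis unfolding uniform_limit_sequentially_iff
  proof (intro allI impI)
    fix eps :: real assume eps: "eps > 0"
    obtain d where d0: "d > 0" and d: "\<And>x x'. x \<in> {0..1} \<Longrightarrow> x' \<in> {0..1} \<Longrightarrow> dist x' x < d \<Longrightarrow> dist (f x') (f x) < eps/2"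
      using uc[unfolded uniformly_continuous_on_def, rule_format, of "eps/2"] eps by auto
    define c where "c = 2 * Bd / d^2"
    have c0: "c > 0" unfolding c_def using Bd0 d0 by simp
    have G: "\<bar>ext01 f t - f x\<bar> \<le> eps/2 + c * (t - x)^2" if x: "x \<in> {0..1}" for x t
    proof -
      define t' where "t' = max 0 (min 1 t)"
      have t': "t' \<in> {0..1}" unfolding t'_def by auto
      have ext: "ext01 f t = f t'" unfolding ext01_def t'_def ..
      have tt: "\<bar>t' - x\<bar> \<le> \<bar>t - x\<bar>" using x unfolding t'_def by (auto simp: abs_le_iff max_def min_def)
      have sq: "(t' - x)^2 \<le> (t - x)^2"
      proof -
        have "(t' - x)^2 = \<bar>t' - x\<bar>^2" by simp
        also have "\<dots> \<le> \<bar>t - x\<bar>^2" by (rule power_mono[OF tt abs_ge_zero])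
        finally show ?thesis by simp
      qed
      show ?thesis
      proof (cases "\<bar>t' - x\<bar> < d")
        case True
        then have "dist (f t') (f x) < eps/2" using d[OF x t'] by (simp add: dist_real_def)
        moreover have "0 \<le> c * (t - x)^2" using c0 by simp
        ultimately show ?thesis unfolding ext by (simp add: dist_real_def)
      next
        case False
        then have "d \<le> \<bar>t' - x\<bar>" by simp
        then have "d^2 \<le> \<bar>t' - x\<bar>^2" using d0 by (intro power_mono) auto
        then have dd: "d^2 \<le> (t - x)^2" using sq by simp
        have "\<bar>f t' - f x\<bar> \<le> \<bar>f t'\<bar> + \<bar>f x\<bar>" by (rule abs_triangle_ineq4)
        also have "\<dots> \<le> 2 * Bd" using Bd[OF t'] Bd[OF x] by simp
        also have "2 * Bd = c * d^2" unfolding c_def using d0 by simp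
        also have "\<dots> \<le> c * (t - x)^2" using c0 dd by (intro mult_left_mono) auto
        finally show ?thesis unfolding ext using eps by simp
      qed
    qed
    have "(\<lambda>n. c * beta n) \<longlonglongrightarrow> c * 0" by (intro tendsto_intros blim)
    then have "\<forall>\<^sub>F n in sequentially. c * beta n < eps/2" using eps by (intro order_tendstoD(2)) auto
    moreover have "\<forall>\<^sub>F n in sequentially. n \<ge> 1" by (rule eventually_ge_at_top)
    ultimately have "\<forall>\<^sub>F n in sequentially. c * beta n < eps/2 \<and> n \<ge> 1" by (rule eventually_conj)
    then obtain N where N: "\<And>n. n \<ge> N \<Longrightarrow> c * beta n < eps/2 \<and> n \<ge> 1"
      unfolding eventually_sequentially by auto
    show "\<exists>N. \<forall>n\<ge>N. \<forall>x\<in>{0..1}. dist (M_pq (p n) (q n) n f x) (f x) < eps"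
    proof (intro exI allI impI ballI)
      fix n :: nat and x :: real assume n: "n \<ge> N" and x: "x \<in> {0..1}"
      show "dist (M_pq (p n) (q n) n f x) (f x) < eps"
      proof (cases "x = 1")
        case True then show ?thesis using eps by (simp add: M_pq_def)
      next
        case False
        then have x0: "0 \<le> x" and x1: "x < 1" using x by auto
        have "\<bar>M_pq (p n) (q n) n f x - f x\<bar> \<le> eps/2 + c * beta n"
          unfolding beta_def e_def
          by (rule main_bound[OF p0 p1 r0 r1 qpr _ x0 x1 bd G]) (use N[OF n] x c0 in auto)
        also have "\<dots> < eps" using N[OF n] by simp
        finally show ?thesis by (simp add: dist_real_def)
      qed
    qed
  qed
qed

end
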